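(* Let $\Gamma\subseteq\mathbb R^n$ be an open convex set, $S\subseteq\Gamma$ a nonempty convex set, and $f:\Gamma\to\mathbb R$ a continuously differentiable function that is quasiconvex on $\Gamma$. Let $\bar S=\arg\min\{f(x)\mid x\in S\}$, and suppose $\bar x\in\bar S$ with $\nabla f(\bar x)=0$. Then $\nabla f(x)=0$ for all $x\in\bar S$. If in addition $f$ is pseudoconvex at every point $x\in S\setminus\bar S$, then $\bar S=\tilde S:=\{x\in S\mid \nabla f(x)=0\}$.
   Context: A function $f:\Gamma\to\mathbb R$ on a convex set $\Gamma$ is quasiconvex on $\Gamma$ iff $f(x+t(y-x))\le\max\{f(x),f(y)\}$ for all $x,y\in\Gamma$, $t\in[0,1]$. A differentiable function $f$ on the open set $\Gamma$ is pseudoconvex at $x\in\Gamma$ iff for every $y\in\Gamma$, $f(y)<f(x)$ implies $\nabla f(x)^T(y-x)<0$. *)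

theory Defs
  imports "HOL-Analysis.Analysis"
begin

definition quasiconvex_on :: "'a::real_vector set \<Rightarrow> ('a \<Rightarrow> real) \<Rightarrow> bool" where
  "quasiconvex_on G f \<longleftrightarrow>
     (\<forall>x\<in>G. \<forall>y\<in>G. \<forall>t::real. 0 \<le> t \<and> t \<le> 1 \<longrightarrow> f (x + t *\<^sub>R (y - x)) \<le> max (f x) (f y))"

definition pseudoconvex_at :: "'a::real_inner set \<Rightarrow> ('a \<Rightarrow> real) \<Rightarrow> ('a \<Rightarrow> 'a) \<Rightarrow> 'a \<Rightarrow> bool" where
  "pseudoconvex_at G f grad x \<longleftrightarrow> (\<forall>y\<in>G. f y < f x \<longrightarrow> grad x \<bullet> (y - x) < 0)"

definition argmin_on :: "('a \<Rightarrow> real) \<Rightarrow> 'a set \<Rightarrow> 'a set" where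
  "argmin_on f S = {x \<in> S. \<forall>y\<in>S. f x \<le> f y}"

end

theory Submission
  imports Defs
begin

lemma pos_deriv_ev:
  fixes \<phi> :: "real \<Rightarrow> real"
  assumes "(\<phi> has_real_derivative l) (at 0)" "l > 0"
  shows "eventually (\<lambda>t. \<phi> 0 < \<phi> t) (at_right 0)"
proof -
  obtain d where d: "d > 0" "\<And>h. h > 0 \<Longrightarrow> h < d \<Longrightarrow> \<phi> 0 < \<phi> (0 + h)"
    using has_real_derivative_pos_inc_right[of \<phi> l 0 UNIV] assms by auto
  show ?thesis unfolding eventually_at_right_field
    using d by (intro exI[of _ d]) auto
qed

lemma line_deriv:
  fixes f :: "'a::real_inner \<Rightarrow> real"
  assumes "(f has_derivative (\<lambda>h. g \<bullet> h)) (at y)"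
  shows "((\<lambda>t. f (y + t *\<^sub>R v)) has_real_derivative (g \<bullet> v)) (at 0)"
proof -
  have l: "((\<lambda>t::real. y + t *\<^sub>R v) has_derivative (\<lambda>t. t *\<^sub>R v)) (at 0)"
    by (auto intro!: derivative_eq_intros)
  have "((\<lambda>t. f (y + t *\<^sub>R v)) has_derivative (\<lambda>t. g \<bullet> (t *\<^sub>R v))) (at 0)"
    using has_derivative_compose[OF l, of f "\<lambda>h. g \<bullet> h"] assms by simp
  moreover have "(\<lambda>t. g \<bullet> (t *\<^sub>R v)) = (\<lambda>t. (g \<bullet> v) * t)" by (auto simp: algebra_simps)
  ultimately show ?thesis unfolding has_field_derivative_def by simp
qed

lemma ev_in_open:
  fixes P :: "real \<Rightarrow> 'a::real_normed_vector"
  assumes "open G" "y \<in> G" "P = (\<lambda>t. y + t *\<^sub>R v)"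
  shows "eventually (\<lambda>t. P t \<in> G) (at_right 0)"
proof -
  have "(P \<longlongrightarrow> y) (at_right 0)" unfolding assms(3)
    by (auto intro!: tendsto_eq_intros)
  thus ?thesis using topological_tendstoD assms by blast
qed


theorem theorem2:
  fixes f :: "real ^ 'n \<Rightarrow> real" and grad :: "real ^ 'n \<Rightarrow> real ^ 'n"
    and G S :: "(real ^ 'n) set" and xbar :: "real ^ 'n"
  assumes "open G" and "convex G"
    and "S \<subseteq> G" and "S \<noteq> {}" and "convex S"
    and deriv: "\<And>x. x \<in> G \<Longrightarrow> (f has_derivative (\<lambda>h. grad x \<bullet> h)) (at x)"
    and "continuous_on G grad"
    and "quasiconvex_on G f"
    and "xbar \<in> argmin_on f S" and "grad xbar = 0"
  shows "(\<forall>x\<in>argmin_on f S. grad x = 0)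
    \<and> ((\<forall>x\<in>S - argmin_on f S. pseudoconvex_at G f grad x)
         \<longrightarrow> argmin_on f S = {x\<in>S. grad x = 0})"
proof -
  note qc = assms(8)[unfolded quasiconvex_on_def]
  have xbS: "xbar \<in> S" and xbmin: "\<And>y. y \<in> S \<Longrightarrow> f xbar \<le> f y"
    using assms(9) by (auto simp: argmin_on_def)
  have part1: "grad x = 0" if xA: "x \<in> argmin_on f S" for x
  proof (rule ccontr)
    assume gne: "grad x \<noteq> 0"
    define g where "g = grad x"
    define m where "m = f xbar"
    define d where "d = xbar - x"
    have xS: "x \<in> S" and fx: "f x = m"
      using xA xbmin xbS by (auto simp: argmin_on_def m_def intro: antisym)
    have xG: "x \<in> G" and xbG: "xbar \<in> G" using xS xbS assms(3) by auto
    have "isCont grad x"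
      using assms(7) assms(1) xG continuous_on_eq_continuous_at by blast
    hence "((\<lambda>l. grad (x + l *\<^sub>R d)) \<longlongrightarrow> g) (at_right 0)"
      unfolding g_def
      by (intro isCont_tendsto_compose[of x grad] tendsto_eq_intros) (auto intro: tendsto_eq_intros)
    hence "((\<lambda>l. grad (x + l *\<^sub>R d) \<bullet> g) \<longlongrightarrow> g \<bullet> g) (at_right 0)"
      by (intro tendsto_intros) auto
    moreover have "g \<bullet> g > 0" using gne g_def by simp
    ultimately have ev1: "eventually (\<lambda>l. grad (x + l *\<^sub>R d) \<bullet> g > 0) (at_right 0)"
      using order_tendstoD(1) by blast
    have ev2: "eventually (\<lambda>l::real. 0 < l \<and> l < 1) (at_right 0)"
      unfolding eventually_at_right_field by (intro exI[of _ 1]) auto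
    obtain lam where lam: "0 < lam" "lam < 1" "grad (x + lam *\<^sub>R d) \<bullet> g > 0"
      using eventually_happens'[OF _ eventually_conj[OF ev1 ev2]] by auto
    define z where "z = x + lam *\<^sub>R d"
    have zS: "z \<in> S"
    proof -
      have "z = (1 - lam) *\<^sub>R x + lam *\<^sub>R xbar" unfolding z_def d_def by (simp add: algebra_simps)
      thus ?thesis using assms(5) xS xbS lam convexD[of S x xbar "1-lam" lam] by auto
    qed
    hence zG: "z \<in> G" using assms(3) by auto
    have fz: "f z = m"
    proof (rule antisym)
      show "f z \<le> m" using qc xG xbG lam fx unfolding z_def d_def m_def
        by (metis less_eq_real_def max.idem)
      show "m \<le> f z" using xbmin zS m_def by auto
    qed
    define h where "h = grad z"
    have hg: "h \<bullet> g > 0" using lam unfolding h_def z_def by (simp add: inner_commute)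
    hence hne: "h \<noteq> 0" by auto
    define c where "c = 1 / (1 - lam)"
    define K where "K = 2 / lam"
    have cpos: "c > 0" using lam c_def by auto
    have k0: "(1 - lam) * c = 1" using lam unfolding c_def by simp
    have k1: "- c + lam * c = -1" using k0 by (simp add: algebra_simps)
    have k2: "lam * K = 2" using lam unfolding K_def by simp
    have ckey: "- c + lam * K + lam * c = 1" using k1 k2 by linarith
    have dA: "((\<lambda>t. f (z + t *\<^sub>R h)) has_real_derivative (h \<bullet> h)) (at 0)"
      using line_deriv[OF deriv[OF zG]] h_def by simp
    have dB: "((\<lambda>t. f (x + t *\<^sub>R (- c *\<^sub>R h))) has_real_derivative (- c * (g \<bullet> h))) (at 0)"
      using line_deriv[OF deriv[OF xG], of "- c *\<^sub>R h"] g_def by simp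
    have dC: "((\<lambda>t. f (xbar + t *\<^sub>R (K *\<^sub>R h))) has_real_derivative 0) (at 0)"
      using line_deriv[OF deriv[OF xbG], of "K *\<^sub>R h"] assms(10) by simp
    have e1: "eventually (\<lambda>t. f (z + 0 *\<^sub>R h) - f (x + 0 *\<^sub>R (- c *\<^sub>R h))
               < f (z + t *\<^sub>R h) - f (x + t *\<^sub>R (- c *\<^sub>R h))) (at_right 0)"
      using pos_deriv_ev[OF DERIV_diff[OF dA dB]] hg hne cpos
      by (simp add: inner_commute add_pos_pos)
    have e2: "eventually (\<lambda>t. f (z + 0 *\<^sub>R h) - f (xbar + 0 *\<^sub>R (K *\<^sub>R h))
               < f (z + t *\<^sub>R h) - f (xbar + t *\<^sub>R (K *\<^sub>R h))) (at_right 0)"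
      using pos_deriv_ev[OF DERIV_diff[OF dA dC]] hne by simp
    have e3: "eventually (\<lambda>t. x + t *\<^sub>R (- c *\<^sub>R h) \<in> G) (at_right 0)"
      using ev_in_open[OF assms(1) xG refl] .
    have e4: "eventually (\<lambda>t. xbar + t *\<^sub>R (K *\<^sub>R h) \<in> G) (at_right 0)"
      using ev_in_open[OF assms(1) xbG refl] .
    obtain t where t: "f (z + 0 *\<^sub>R h) - f (x + 0 *\<^sub>R (- c *\<^sub>R h))
               < f (z + t *\<^sub>R h) - f (x + t *\<^sub>R (- c *\<^sub>R h))"
      "f (z + 0 *\<^sub>R h) - f (xbar + 0 *\<^sub>R (K *\<^sub>R h))
               < f (z + t *\<^sub>R h) - f (xbar + t *\<^sub>R (K *\<^sub>R h))"
      "x + t *\<^sub>R (- c *\<^sub>R h) \<in> G" "xbar + t *\<^sub>R (K *\<^sub>R h) \<in> G"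
      using eventually_happens'[OF _ eventually_conj[OF e1 eventually_conj[OF e2 eventually_conj[OF e3 e4]]]]
      by auto
    define P where "P = x + t *\<^sub>R (- c *\<^sub>R h)"
    define Q where "Q = xbar + t *\<^sub>R (K *\<^sub>R h)"
    have comb: "P + lam *\<^sub>R (Q - P) = z + t *\<^sub>R h"
    proof -
      have "P + lam *\<^sub>R (Q - P) = z + (t * (- c + lam * K + lam * c)) *\<^sub>R h"
        unfolding P_def Q_def z_def d_def by (simp add: algebra_simps)
      thus ?thesis using ckey by simp
    qed
    have "f (P + lam *\<^sub>R (Q - P)) \<le> max (f P) (f Q)"
      using qc t(3,4) lam unfolding P_def Q_def by auto
    moreover have "f P < f (z + t *\<^sub>R h)" "f Q < f (z + t *\<^sub>R h)"
      using t(1,2) fz fx m_def unfolding P_def Q_def by auto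
    ultimately show False using comb by auto
  qed
  show ?thesis
  proof (intro conjI ballI impI)
    show "\<And>x. x \<in> argmin_on f S \<Longrightarrow> grad x = 0" using part1 by blast
    assume ps: "\<forall>x\<in>S - argmin_on f S. pseudoconvex_at G f grad x"
    show "argmin_on f S = {x \<in> S. grad x = 0}"
    proof
      show "argmin_on f S \<subseteq> {x \<in> S. grad x = 0}" using part1 by (auto simp: argmin_on_def)
      show "{x \<in> S. grad x = 0} \<subseteq> argmin_on f S"
      proof (rule ccontr)
        assume "\<not> ?thesis"
        then obtain x where x: "x \<in> S" "grad x = 0" "x \<notin> argmin_on f S" by auto
        then obtain y where "y \<in> S" "f y < f x" by (auto simp: argmin_on_def not_le)
        hence "f xbar < f x" using xbmin by fastforce
        moreover have "pseudoconvex_at G f grad x" using ps x by auto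
        ultimately have "grad x \<bullet> (xbar - x) < 0"
          using xbS assms(3) unfolding pseudoconvex_at_def by auto
        thus False using x by simp
      qed
    qed
  qed
qed

end
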